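(* Let $M=(\alpha_{i,j})$ be a Griffiths positive $k\times k$ matrix of constant coefficient $(1,1)$-forms on $\mathbb{C}^n$ ($k\geqslant 2$) such that $\alpha_{1,1}=\omega:=\sum_{l=1}^n\frac{\sqrt{-1}}{2}dz_l\wedge d\overline{z_l}$ in complex linear coordinates $(z_1,\dots,z_n)$. Then there is $C\in GL_k(\mathbb{C})$ such that \[ C\cdot M\cdot C^H= \begin{pmatrix} \omega & \rho_{1,2} & \cdots & \rho_{1,k}\\ \overline{\rho_{1,2}} & \omega+\rho_{2,2} & \cdots & \rho_{2,k}\\ \vdots & \vdots & \ddots & \vdots\\ \overline{\rho_{1,k}} & \overline{\rho_{2,k}} & \cdots & \omega+\rho_{k,k} \end{pmatrix} \] with all $\rho_{i,j}\in P^{1,1}$. Moreover, one may in addition choose (after a change of complex linear coordinates in which $\omega$ keeps the form $\sum_l\frac{\sqrt{-1}}{2}dz_l\wedge d\overline{z_l}$) that $\rho_{2,2}=\sum_{l=1}^n b_{2,2}^{(l)}\frac{\sqrt{-1}}{2}dz_l\wedge d\overline{z_l}$ with $\sum_{l=1}^n b_{2,2}^{(l)}=0$ and $b_{2,2}^{(l)}>-1$ for each $1\leqslant l\leqslant n$.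
   Context: $V^{1,1}$ denotes the space of constant coefficient $(1,1)$-forms on $\mathbb{C}^n$. A $(1,1)$-form is Kähler if it equals $\sum_l\frac{\sqrt{-1}}{2}dw_l\wedge d\overline{w_l}$ in some complex linear coordinates. A $k\times k$ matrix $M=(\alpha_{i,j})$ of $(1,1)$-forms with $\alpha_{i,j}=\overline{\alpha_{j,i}}$ is Griffiths positive if $\sum_{i,j}\theta_i\alpha_{i,j}\overline{\theta_j}$ is Kähler for all $\theta\in\mathbb{C}^k\setminus\{0\}$. For $C=(c_{i,j})\in GL_k(\mathbb{C})$, $C\cdot M\cdot C^H$ is the matrix with entries $\sum_{a,b}c_{i,a}\alpha_{a,b}\overline{c_{j,b}}$. The primitive space is $P^{1,1}=\{\alpha\in V^{1,1}:\alpha\wedge\omega^{n-1}=0\}$. *)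

theory Defs
  imports "HOL-Analysis.Analysis"
begin

text \<open>A constant coefficient (1,1)-form on C^n in coordinates z is represented by its
coefficient matrix h, meaning  sum_{a,b<n} h a b (sqrt(-1)/2) dz_a wedge dzbar_b.
Only the entries with indices below n are meaningful.\<close>

type_synonym form = "nat \<Rightarrow> nat \<Rightarrow> complex"

definition feq :: "nat \<Rightarrow> form \<Rightarrow> form \<Rightarrow> bool" where
  "feq n h g \<longleftrightarrow> (\<forall>a<n. \<forall>b<n. h a b = g a b)"

definition omega :: form where
  "omega = (\<lambda>a b. if a = b then 1 else 0)"

definition conj_form :: "form \<Rightarrow> form" where
  "conj_form h = (\<lambda>a b. cnj (h b a))"

definition invertible_n :: "nat \<Rightarrow> (nat \<Rightarrow> nat \<Rightarrow> complex) \<Rightarrow> bool" where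
  "invertible_n n A \<longleftrightarrow> (\<exists>B.
     (\<forall>a<n. \<forall>b<n. (\<Sum>c<n. A a c * B c b) = (if a = b then 1 else 0)) \<and>
     (\<forall>a<n. \<forall>b<n. (\<Sum>c<n. B a c * A c b) = (if a = b then 1 else 0)))"

text \<open>Kaehler: equals sum_l (sqrt(-1)/2) dw_l wedge dwbar_l for some complex linear
coordinates w_l = sum_a A l a z_a (A invertible).\<close>
definition kahler :: "nat \<Rightarrow> form \<Rightarrow> bool" where
  "kahler n h \<longleftrightarrow> (\<exists>A. invertible_n n A \<and>
     feq n h (\<lambda>a b. \<Sum>l<n. A l a * cnj (A l b)))"

text \<open>Coefficient of alpha_0 wedge ... wedge alpha_{n-1} with respect to the volume form
prod_a (sqrt(-1)/2) dz_a wedge dzbar_a.\<close>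
definition wedge_top :: "nat \<Rightarrow> (nat \<Rightarrow> form) \<Rightarrow> complex" where
  "wedge_top n H = (\<Sum>\<sigma>\<in>{p. p permutes {..<n}}. \<Sum>\<tau>\<in>{p. p permutes {..<n}}.
      of_int (sign \<sigma> * sign \<tau>) * (\<Prod>j<n. H j (\<sigma> j) (\<tau> j)))"

text \<open>primitive: alpha wedge omega^(n-1) = 0\<close>
definition primitive :: "nat \<Rightarrow> form \<Rightarrow> bool" where
  "primitive n h \<longleftrightarrow> wedge_top n (\<lambda>j. if j = 0 then h else omega) = 0"

definition griffiths_positive :: "nat \<Rightarrow> nat \<Rightarrow> (nat \<Rightarrow> nat \<Rightarrow> form) \<Rightarrow> bool" where
  "griffiths_positive n k M \<longleftrightarrow>
     (\<forall>i<k. \<forall>j<k. feq n (M i j) (conj_form (M j i))) \<and>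
     (\<forall>\<theta>::nat \<Rightarrow> complex. (\<exists>i<k. \<theta> i \<noteq> 0) \<longrightarrow>
        kahler n (\<lambda>a b. \<Sum>i<k. \<Sum>j<k. \<theta> i * M i j a b * cnj (\<theta> j)))"

definition congr :: "nat \<Rightarrow> (nat \<Rightarrow> nat \<Rightarrow> complex) \<Rightarrow> (nat \<Rightarrow> nat \<Rightarrow> form) \<Rightarrow> nat \<Rightarrow> nat \<Rightarrow> form" where
  "congr k C M i j = (\<lambda>a b. \<Sum>p<k. \<Sum>q<k. C i p * M p q a b * cnj (C j q))"

text \<open>Coefficients of a form in new linear coordinates w, where z_a = sum_c V a c w_c.\<close>
definition coord_change :: "nat \<Rightarrow> (nat \<Rightarrow> nat \<Rightarrow> complex) \<Rightarrow> form \<Rightarrow> form" where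
  "coord_change n V h = (\<lambda>c d. \<Sum>a<n. \<Sum>b<n. V a c * h a b * cnj (V b d))"

text \<open>The normal form of the theorem (0-based indices; index 0 is the paper's 1).\<close>
definition normal_shape :: "nat \<Rightarrow> nat \<Rightarrow> (nat \<Rightarrow> nat \<Rightarrow> form) \<Rightarrow> bool" where
  "normal_shape n k N \<longleftrightarrow>
     feq n (N 0 0) omega \<and>
     (\<forall>i<k. i \<noteq> 0 \<longrightarrow> primitive n (\<lambda>a b. N i i a b - omega a b)) \<and>
     (\<forall>i<k. \<forall>j<k. i < j \<longrightarrow> primitive n (N i j) \<and> feq n (N j i) (conj_form (N i j)))"

end

theory Submission
  imports Defs "Jordan_Normal_Form.Spectral_Radius"
begin

definition idm :: "nat \<Rightarrow> nat \<Rightarrow> complex" where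
  "idm = (\<lambda>i j. if i = j then 1 else 0)"

definition mm :: "nat \<Rightarrow> form \<Rightarrow> form \<Rightarrow> form" where
  "mm m A B = (\<lambda>i j. \<Sum>c<m. A i c * B c j)"

lemma bridge_inv:
  assumes "feq m (mm m A B) idm"
  shows "invertible_n m A"
proof -
  define A' where "A' = Matrix.mat m m (\<lambda>(i,j). A i j)"
  define B' where "B' = Matrix.mat m m (\<lambda>(i,j). B i j)"
  have cA: "A' \<in> carrier_mat m m" and cB: "B' \<in> carrier_mat m m" unfolding A'_def B'_def by auto
  have "A' * B' = 1\<^sub>m m"
    using assms unfolding feq_def mm_def idm_def
    by (intro eq_matI) (auto simp: A'_def B'_def scalar_prod_def row_def col_def lessThan_atLeast0 ac_simps intro!: sum.cong)
  from mat_mult_left_right_inverse[OF cA cB this] have BA: "B' * A' = 1\<^sub>m m" .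
  have "\<forall>a<m. \<forall>b<m. (\<Sum>c<m. B a c * A c b) = (if a = b then 1 else 0)"
  proof (intro allI impI)
    fix a b assume ab: "a < m" "b < m"
    have "(B' * A') $$ (a,b) = 1\<^sub>m m $$ (a,b)" using BA by simp
    thus "(\<Sum>c<m. B a c * A c b) = (if a = b then 1 else 0)"
      using ab by (auto simp: A'_def B'_def scalar_prod_def row_def col_def lessThan_atLeast0 intro!: sum.cong)
  qed
  thus ?thesis using assms unfolding invertible_n_def feq_def mm_def idm_def by blast
qed

lemma bridge_eig:
  fixes A :: "nat \<Rightarrow> nat \<Rightarrow> complex"
  assumes "m > 0"
  shows "\<exists>v \<mu>. (\<exists>i<m. v i \<noteq> 0) \<and> (\<forall>i<m. (\<Sum>j<m. A i j * v j) = \<mu> * v i)"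
proof -
  define A' where "A' = Matrix.mat m m (\<lambda>(i,j). A i j)"
  have cA: "A' \<in> carrier_mat m m" unfolding A'_def by auto
  from spectrum_non_empty[OF cA assms] obtain \<mu> where "eigenvalue A' \<mu>"
    unfolding spectrum_def by auto
  then obtain v where ev: "eigenvector A' v \<mu>" unfolding eigenvalue_def by auto
  hence v: "v \<in> carrier_vec m" "v \<noteq> 0\<^sub>v m" "A' *\<^sub>v v = \<mu> \<cdot>\<^sub>v v"
    unfolding eigenvector_def A'_def by auto
  have "\<exists>i<m. v $ i \<noteq> 0"
  proof (rule ccontr)
    assume "\<not> ?thesis"
    hence "v = 0\<^sub>v m" using v(1) by (intro eq_vecI) auto
    with v(2) show False by simp
  qed
  moreover have "\<forall>i<m. (\<Sum>j<m. A i j * v $ j) = \<mu> * v $ i"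
  proof (intro allI impI)
    fix i assume i: "i < m"
    have "(A' *\<^sub>v v) $ i = (\<mu> \<cdot>\<^sub>v v) $ i" using v(3) by simp
    thus "(\<Sum>j<m. A i j * v $ j) = \<mu> * v $ i"
      using i v(1) by (auto simp: A'_def scalar_prod_def row_def lessThan_atLeast0 intro!: sum.cong)
  qed
  ultimately show ?thesis by blast
qed

definition ad :: "form \<Rightarrow> form" where
  "ad A = (\<lambda>i j. cnj (A j i))"

definition dg :: "(nat \<Rightarrow> complex) \<Rightarrow> form" where
  "dg d = (\<lambda>i j. if i = j then d i else 0)"

definition unitary :: "nat \<Rightarrow> form \<Rightarrow> bool" where
  "unitary m U \<longleftrightarrow> feq m (mm m (ad U) U) idm \<and> feq m (mm m U (ad U)) idm"

definition qf :: "nat \<Rightarrow> form \<Rightarrow> (nat \<Rightarrow> complex) \<Rightarrow> complex" where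
  "qf m A x = (\<Sum>i<m. \<Sum>j<m. x i * A i j * cnj (x j))"

definition pd :: "nat \<Rightarrow> form \<Rightarrow> bool" where
  "pd m A \<longleftrightarrow> (\<forall>x. (\<exists>i<m. x i \<noteq> 0) \<longrightarrow> 0 < Re (qf m A x))"

lemma mm_assoc: "mm m (mm m A B) C = mm m A (mm m B C)"
proof (intro ext)
  fix i j
  have "(\<Sum>c<m. (\<Sum>d<m. A i d * B d c) * C c j) = (\<Sum>c<m. \<Sum>d<m. A i d * B d c * C c j)"
    by (simp add: sum_distrib_right)
  also have "\<dots> = (\<Sum>d<m. \<Sum>c<m. A i d * B d c * C c j)" by (rule sum.swap)
  also have "\<dots> = (\<Sum>d<m. A i d * (\<Sum>c<m. B d c * C c j))" by (simp add: sum_distrib_left mult.assoc)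
  finally show "mm m (mm m A B) C i j = mm m A (mm m B C) i j" unfolding mm_def .
qed

lemma ad_mm: "ad (mm m A B) = mm m (ad B) (ad A)"
  unfolding mm_def ad_def by (auto simp: mult.commute intro!: ext)

lemma ad_ad[simp]: "ad (ad A) = A"
  unfolding ad_def by simp

lemma feq_refl[simp]: "feq m A A" unfolding feq_def by simp
lemma feq_sym: "feq m A B \<Longrightarrow> feq m B A" unfolding feq_def by simp
lemma feq_trans[trans]: "feq m A B \<Longrightarrow> feq m B C \<Longrightarrow> feq m A C" unfolding feq_def by simp

lemma mm_cong: "feq m A A' \<Longrightarrow> feq m B B' \<Longrightarrow> feq m (mm m A B) (mm m A' B')"
  unfolding feq_def mm_def by (auto intro!: sum.cong)

lemma mm_cong_pt: "feq m A A' \<Longrightarrow> feq m B B' \<Longrightarrow> i < m \<Longrightarrow> j < m \<Longrightarrow> mm m A B i j = mm m A' B' i j"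
  using mm_cong unfolding feq_def by blast

lemma ad_cong: "feq m A B \<Longrightarrow> feq m (ad A) (ad B)"
  unfolding feq_def ad_def by simp

lemma if_mult0: "(if P then x else 0) * y = (if P then x * y else (0::complex))" by simp
lemma mult_if0: "y * (if P then x else 0) = (if P then y * x else (0::complex))" by simp

lemma mm_idl: "feq m (mm m idm A) A"
  unfolding feq_def mm_def idm_def by (simp add: if_mult0)

lemma mm_idr: "feq m (mm m A idm) A"
  unfolding feq_def mm_def idm_def by (simp add: mult_if0)

lemma mm_dgl: "i < m \<Longrightarrow> mm m (dg d) A i j = d i * A i j"
  unfolding mm_def dg_def by (simp add: if_mult0)

lemma mm_dgr: "j < m \<Longrightarrow> mm m A (dg d) i j = A i j * d j"
  unfolding mm_def dg_def by (simp add: mult_if0)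

lemma ad_idm[simp]: "ad idm = idm" unfolding ad_def idm_def by (auto intro!: ext)

lemma ad_dg: "ad (dg d) = dg (\<lambda>i. cnj (d i))" unfolding ad_def dg_def by (auto intro!: ext)

lemma mid_id: "feq m X idm \<Longrightarrow> feq m (mm m A (mm m X B)) (mm m A B)"
  by (rule mm_cong[OF feq_refl feq_trans[OF mm_cong[OF _ feq_refl] mm_idl]])

lemma unitary_mm:
  assumes "unitary m U" "unitary m W"
  shows "unitary m (mm m U W)"
proof -
  have u1: "feq m (mm m (ad U) U) idm" and u2: "feq m (mm m U (ad U)) idm"
   and w1: "feq m (mm m (ad W) W) idm" and w2: "feq m (mm m W (ad W)) idm"
    using assms unfolding unitary_def by auto
  have e1: "mm m (ad (mm m U W)) (mm m U W) = mm m (ad W) (mm m (mm m (ad U) U) W)"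
    by (simp add: ad_mm mm_assoc)
  have e2: "mm m (mm m U W) (ad (mm m U W)) = mm m U (mm m (mm m W (ad W)) (ad U))"
    by (simp add: ad_mm mm_assoc)
  have 1: "feq m (mm m (ad (mm m U W)) (mm m U W)) idm"
    unfolding e1 by (rule feq_trans[OF mid_id[OF u1] w1])
  have 2: "feq m (mm m (mm m U W) (ad (mm m U W))) idm"
    unfolding e2 by (rule feq_trans[OF mid_id[OF w2] u2])
  from 1 2 show ?thesis unfolding unitary_def by auto
qed

definition blk :: "complex \<Rightarrow> form \<Rightarrow> form" where
  "blk z P = (\<lambda>i j. if i = 0 \<and> j = 0 then z else if i = 0 \<or> j = 0 then 0 else P (i - 1) (j - 1))"

lemma blk_mm: "mm (Suc m) (blk z P) (blk z' Q) = blk (z * z') (mm m P Q)"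
proof (intro ext)
  fix i j
  show "mm (Suc m) (blk z P) (blk z' Q) i j = blk (z * z') (mm m P Q) i j"
    unfolding mm_def sum.lessThan_Suc_shift
    by (cases i; cases j) (simp_all add: blk_def)
qed

lemma ad_blk: "ad (blk z P) = blk (cnj z) (ad P)"
  unfolding ad_def blk_def by (auto intro!: ext)

lemma blk_idm: "blk 1 idm = idm"
  unfolding idm_def blk_def by (auto intro!: ext)

lemma blk_dg: "blk (d 0) (dg (\<lambda>i. d (Suc i))) = dg d"
proof (intro ext)
  fix i j show "blk (d 0) (dg (\<lambda>i. d (Suc i))) i j = dg d i j"
    by (cases i; cases j) (simp_all add: blk_def dg_def)
qed

lemma blk_cong: "feq m P Q \<Longrightarrow> feq (Suc m) (blk z P) (blk z Q)"
  unfolding feq_def blk_def by auto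

lemma unitary_blk: "unitary m W \<Longrightarrow> unitary (Suc m) (blk 1 W)"
  unfolding unitary_def
  by (simp add: ad_blk blk_mm) (metis blk_cong blk_idm)

lemma unitary_dg:
  assumes "\<forall>i<m. d i * cnj (d i) = 1"
  shows "unitary m (dg d)"
  using assms unfolding unitary_def feq_def ad_dg
  by (simp add: mm_dgl) (auto simp: dg_def idm_def mult.commute)

lemma unitary_0: "unitary 0 U" unfolding unitary_def feq_def by simp

lemma sum_idm_l: "i < m \<Longrightarrow> (\<Sum>l<m. idm i l * f l) = f i"
  unfolding idm_def by (simp add: if_mult0)

lemma sum_idm_r: "j < m \<Longrightarrow> (\<Sum>l<m. f l * idm l j) = f j"
  unfolding idm_def by (simp add: mult_if0)

lemma house:
  assumes m: "0 < m" and u: "(\<Sum>i<m. u i * cnj (u i)) = 1"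
  shows "\<exists>V. unitary m V \<and> (\<forall>i<m. V i 0 = u i)"
proof -
  define a where "a = u 0"
  define r where "r = cmod a"
  have r0: "r \<ge> 0" unfolding r_def by simp
  have nn: "\<And>z. z * cnj z = complex_of_real ((cmod z)\<^sup>2)" by (rule complex_norm_square[symmetric])
  define R where "R = (\<Sum>i\<in>{..<m}-{0}. (cmod (u i))\<^sup>2)"
  have R0: "R \<ge> 0" unfolding R_def by (intro sum_nonneg) auto
  have "(\<Sum>i<m. u i * cnj (u i)) = a * cnj a + (\<Sum>i\<in>{..<m}-{0}. u i * cnj (u i))"
    using m by (simp add: a_def sum.remove)
  also have "\<dots> = complex_of_real (r\<^sup>2 + R)" unfolding nn R_def r_def by simp
  finally have rR: "r\<^sup>2 + R = 1" using u by (metis of_real_eq_1_iff)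
  have r1: "r \<le> 1"
  proof (rule ccontr)
    assume "\<not> r \<le> 1" hence "r\<^sup>2 > 1" by (simp add: one_less_power)
    with rR R0 show False by linarith
  qed
  show ?thesis
  proof (cases "r = 1")
    case True
    hence "R = 0" using rR by simp
    hence z: "\<forall>i\<in>{..<m}-{0}. (cmod (u i))\<^sup>2 = 0" unfolding R_def
      by (subst sum_nonneg_eq_0_iff[symmetric]) auto
    define V where "V = dg (\<lambda>i. if i = 0 then a else 1)"
    have aa: "a * cnj a = 1" using True unfolding nn r_def by simp
    have "unitary m V" unfolding V_def by (rule unitary_dg) (auto simp: aa)
    moreover have "\<forall>i<m. V i 0 = u i" using z unfolding V_def dg_def a_def by auto
    ultimately show ?thesis by blast
  next
    case False
    hence r1': "r < 1" using r1 by simp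
    define ph where "ph = (if a = 0 then 1 else a / complex_of_real r)"
    have ph1: "ph * cnj ph = 1"
    proof (cases "a = 0")
      case False
      hence "r > 0" unfolding r_def by simp
      have "ph * cnj ph = (a * cnj a) / complex_of_real (r\<^sup>2)"
        using False unfolding ph_def by (simp add: power2_eq_square)
      also have "\<dots> = 1" unfolding nn r_def using \<open>r > 0\<close> r_def by simp
      finally show ?thesis .
    qed (simp add: ph_def)
    have pa: "cnj a * ph = complex_of_real r"
    proof (cases "a = 0")
      case False
      hence "r > 0" unfolding r_def by simp
      have "cnj a * ph = (a * cnj a) / complex_of_real r"
        using False unfolding ph_def by simp
      also have "\<dots> = complex_of_real r" unfolding nn r_def using \<open>r > 0\<close> r_def
        by (simp add: power2_eq_square)
      finally show ?thesis .
    qed (simp add: ph_def r_def)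
    have pa': "a * cnj ph = complex_of_real r"
      using arg_cong[OF pa, of cnj] by (simp add: mult.commute)
    define w where "w = (\<lambda>l. (if l = 0 then ph else 0) - u l)"
    have wl: "\<And>l. w l * cnj (w l) = (if l = 0 then ph * cnj ph - ph * cnj (u l) - u l * cnj ph else 0) + u l * cnj (u l)"
      unfolding w_def by (simp add: algebra_simps)
    have S: "(\<Sum>l<m. w l * cnj (w l)) = complex_of_real (2 - 2 * r)"
      unfolding wl sum.distrib using m u ph1 pa pa'
      by (simp add: a_def[symmetric] mult.commute)
    define c where "c = complex_of_real (1 / (1 - r))"
    have cS: "c * complex_of_real (2 - 2 * r) = 2" using r1' unfolding c_def
      by (simp add: field_simps)
    have c1: "c * (1 - complex_of_real r) = 1" using r1' unfolding c_def
      by (simp add: field_simps)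
    have cc: "cnj c = c" unfolding c_def by simp
    define H where "H = (\<lambda>i j. idm i j - c * w i * cnj (w j))"
    have adH: "ad H = H" unfolding H_def ad_def idm_def using cc by (auto intro!: ext simp: mult.commute)
    have HH: "feq m (mm m H H) idm"
      unfolding feq_def
    proof (intro allI impI)
      fix i j assume ij: "i < m" "j < m"
      have "\<And>l. H i l * H l j = idm i l * idm l j - idm i l * (c * w l * cnj (w j))
            - (c * w i * cnj (w l)) * idm l j + (c * c * w i * cnj (w j)) * (w l * cnj (w l))"
        unfolding H_def by (simp add: algebra_simps)
      hence "mm m H H i j = (\<Sum>l<m. idm i l * idm l j) - (\<Sum>l<m. idm i l * (c * w l * cnj (w j)))
          - (\<Sum>l<m. (c * w i * cnj (w l)) * idm l j) + (c * c * w i * cnj (w j)) * (\<Sum>l<m. w l * cnj (w l))"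
        unfolding mm_def by (simp add: sum.distrib sum_subtractf sum_distrib_left)
      also have "\<dots> = idm i j - c * w i * cnj (w j) - c * w i * cnj (w j) + (c * c * w i * cnj (w j)) * complex_of_real (2 - 2 * r)"
        using ij by (simp add: sum_idm_l sum_idm_r S)
      also have "\<dots> = idm i j - 2 * c * w i * cnj (w j) + (c * w i * cnj (w j)) * (c * complex_of_real (2 - 2 * r))"
        by (simp add: algebra_simps)
      also have "\<dots> = idm i j" unfolding cS by simp
      finally show "mm m H H i j = idm i j" .
    qed
    have uH: "unitary m H" unfolding unitary_def adH using HH by simp
    define V where "V = mm m H (dg (\<lambda>_. ph))"
    have "unitary m V" unfolding V_def
      by (rule unitary_mm[OF uH unitary_dg]) (simp add: ph1)
    moreover have "\<forall>i<m. V i 0 = u i"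
    proof (intro allI impI)
      fix i assume i: "i < m"
      have "V i 0 = H i 0 * ph" unfolding V_def using m by (simp add: mm_dgr)
      also have "\<dots> = idm i 0 * ph - c * w i * (cnj (w 0) * ph)" unfolding H_def by (simp add: algebra_simps)
      also have "cnj (w 0) * ph = 1 - complex_of_real r"
        unfolding w_def using ph1 pa by (simp add: a_def[symmetric] algebra_simps)
      also have "idm i 0 * ph - c * w i * (1 - complex_of_real r) = idm i 0 * ph - w i"
        using c1 by (simp add: mult.assoc mult.left_commute[of c])
      also have "\<dots> = u i" unfolding w_def idm_def by simp
      finally show "V i 0 = u i" .
    qed
    ultimately show ?thesis by blast
  qed
qed

lemma spectral:
  "feq m (ad A) A \<Longrightarrow> \<exists>U d. unitary m U \<and> feq m (mm m (ad U) (mm m A U)) (dg (\<lambda>i. complex_of_real (d i)))"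
proof (induction m arbitrary: A)
  case 0
  show ?case by (intro exI[of _ idm] exI[of _ "\<lambda>_. 0"]) (simp add: unitary_0 feq_def)
next
  case (Suc m)
  let ?n = "Suc m"
  obtain v \<mu> where v: "\<exists>i<?n. v i \<noteq> 0" and ev: "\<forall>i<?n. (\<Sum>j<?n. A i j * v j) = \<mu> * v i"
    using bridge_eig[of ?n A] by auto
  define sr where "sr = (\<Sum>i<?n. (cmod (v i))\<^sup>2)"
  have sr: "sr > 0"
  proof -
    from v obtain i0 where "i0 < ?n" "v i0 \<noteq> 0" by auto
    thus ?thesis unfolding sr_def by (intro sum_pos2[of _ i0]) auto
  qed
  define s where "s = complex_of_real (sqrt sr)"
  have ss: "s * cnj s = complex_of_real sr" unfolding s_def using sr
    by (simp flip: of_real_mult)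
  have s0: "s \<noteq> 0" unfolding s_def using sr by simp
  define u where "u = (\<lambda>i. v i / s)"
  have uu: "\<And>i. u i * cnj (u i) = complex_of_real ((cmod (v i))\<^sup>2) / complex_of_real sr"
    unfolding u_def complex_norm_square ss[symmetric] by simp
  have u1: "(\<Sum>i<?n. u i * cnj (u i)) = 1"
  proof -
    have "(\<Sum>i<?n. complex_of_real ((cmod (v i))\<^sup>2)) = complex_of_real sr"
      by (simp only: sr_def of_real_sum)
    thus ?thesis unfolding uu sum_divide_distrib[symmetric] using sr by simp
  qed
  have eu: "\<forall>i<?n. (\<Sum>j<?n. A i j * u j) = \<mu> * u i"
  proof (intro allI impI)
    fix i assume i: "i < ?n"
    have "(\<Sum>j<?n. A i j * u j) = (\<Sum>j<?n. A i j * v j) / s"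
      unfolding u_def sum_divide_distrib by simp
    also have "\<dots> = \<mu> * u i" using ev i unfolding u_def by simp
    finally show "(\<Sum>j<?n. A i j * u j) = \<mu> * u i" .
  qed
  obtain V where V: "unitary ?n V" and V0: "\<forall>i<?n. V i 0 = u i"
    using house[OF _ u1] by auto
  define B where "B = mm ?n (ad V) (mm ?n A V)"
  have AV0: "\<forall>l<?n. mm ?n A V l 0 = \<mu> * V l 0"
    using eu V0 unfolding mm_def by simp
  have VV: "feq ?n (mm ?n (ad V) V) idm" using V unfolding unitary_def by simp
  have B0: "\<forall>i<?n. B i 0 = \<mu> * idm i 0"
  proof (intro allI impI)
    fix i assume i: "i < ?n"
    have "B i 0 = (\<Sum>l<?n. ad V i l * (\<mu> * V l 0))"
      unfolding B_def mm_def[of ?n "ad V"] using AV0 by simp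
    also have "\<dots> = \<mu> * mm ?n (ad V) V i 0"
      unfolding mm_def by (simp add: sum_distrib_left algebra_simps)
    also have "\<dots> = \<mu> * idm i 0" using VV i unfolding feq_def by simp
    finally show "B i 0 = \<mu> * idm i 0" .
  qed
  have adB: "ad B = mm ?n (ad V) (mm ?n (ad A) V)"
    unfolding B_def by (simp add: ad_mm mm_assoc)
  have hB: "feq ?n (ad B) B"
    unfolding adB unfolding B_def by (rule mm_cong[OF feq_refl mm_cong[OF Suc.prems feq_refl]])
  have B0': "\<forall>j<?n. B 0 j = cnj \<mu> * idm 0 j"
  proof (intro allI impI)
    fix j assume j: "j < ?n"
    have "B 0 j = ad B 0 j" using hB j unfolding feq_def by simp
    also have "\<dots> = cnj (B j 0)" unfolding ad_def by simp
    also have "\<dots> = cnj \<mu> * idm 0 j" using B0 j unfolding idm_def by auto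
    finally show "B 0 j = cnj \<mu> * idm 0 j" .
  qed
  have \<mu>r: "cnj \<mu> = \<mu>" using B0 B0' by (auto simp: idm_def)
  define B' where "B' = (\<lambda>i j. B (Suc i) (Suc j))"
  have hB': "feq m (ad B') B'" using hB unfolding feq_def B'_def ad_def by simp
  obtain W d' where W: "unitary m W"
    and Wd: "feq m (mm m (ad W) (mm m B' W)) (dg (\<lambda>i. complex_of_real (d' i)))"
    using Suc.IH[OF hB'] by blast
  have blkB: "feq ?n B (blk \<mu> B')"
    unfolding feq_def
  proof (intro allI impI)
    fix i j assume ij: "i < ?n" "j < ?n"
    show "B i j = blk \<mu> B' i j"
    proof (cases "i = 0")
      case True thus ?thesis using B0' ij \<mu>r by (auto simp: blk_def idm_def)
    next
      case False
      show ?thesis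
      proof (cases "j = 0")
        case True thus ?thesis using B0 ij False by (auto simp: blk_def idm_def)
      next
        case False
        thus ?thesis using \<open>i \<noteq> 0\<close> by (auto simp: blk_def B'_def)
      qed
    qed
  qed
  define U where "U = mm ?n V (blk 1 W)"
  have uU: "unitary ?n U" unfolding U_def by (rule unitary_mm[OF V unitary_blk[OF W]])
  have e1: "mm ?n (ad U) (mm ?n A U) = mm ?n (blk 1 (ad W)) (mm ?n B (blk 1 W))"
    unfolding U_def B_def by (simp add: ad_mm ad_blk mm_assoc)
  have f1: "feq ?n (mm ?n (blk 1 (ad W)) (mm ?n B (blk 1 W))) (mm ?n (blk 1 (ad W)) (mm ?n (blk \<mu> B') (blk 1 W)))"
    by (rule mm_cong[OF feq_refl mm_cong[OF blkB feq_refl]])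
  have e2: "mm ?n (blk 1 (ad W)) (mm ?n (blk \<mu> B') (blk 1 W)) = blk \<mu> (mm m (ad W) (mm m B' W))"
    by (simp add: blk_mm)
  define d where "d = (\<lambda>i. if i = 0 then Re \<mu> else d' (i - 1))"
  have \<mu>R: "complex_of_real (Re \<mu>) = \<mu>" using \<mu>r by (simp add: Reals_cnj_iff[symmetric])
  have e3: "blk \<mu> (dg (\<lambda>i. complex_of_real (d' i))) = dg (\<lambda>i. complex_of_real (d i))"
    using blk_dg[of "\<lambda>i. complex_of_real (d i)"] \<mu>R unfolding d_def by simp
  have "feq ?n (mm ?n (ad U) (mm ?n A U)) (dg (\<lambda>i. complex_of_real (d i)))"
    unfolding e1 e3[symmetric]
    by (rule feq_trans[OF f1]) (unfold e2, rule blk_cong[OF Wd])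
  with uU show ?case by blast
qed

lemma perm_agree0:
  assumes s: "\<sigma> permutes {..<n}" and t: "\<tau> permutes {..<n}"
    and ag: "\<forall>j<n. j \<noteq> 0 \<longrightarrow> \<sigma> j = \<tau> j"
  shows "\<sigma> = \<tau>"
proof (rule ext)
  fix x
  show "\<sigma> x = \<tau> x"
  proof (cases "x < n")
    case False thus ?thesis using s t by (simp add: permutes_not_in)
  next
    case True
    show ?thesis
    proof (cases "x = 0")
      case False thus ?thesis using ag True by simp
    next
      case x0: True
      have "\<tau> 0 \<in> {..<n}" using permutes_in_image[OF t, of 0] True x0 by simp
      then obtain y where y: "y \<in> {..<n}" "\<sigma> y = \<tau> 0"
        using permutes_image[OF s] by (metis imageE)
      show ?thesis
      proof (cases "y = 0")
        case True thus ?thesis using y x0 by simp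
      next
        case False
        hence "\<tau> y = \<tau> 0" using ag y by auto
        hence "y = 0" using permutes_inj[OF t] by (simp add: inj_eq)
        with False show ?thesis by simp
      qed
    qed
  qed
qed

lemma card_fiber:
  fixes a n :: nat
  assumes a: "a < n"
  shows "card {\<sigma>. \<sigma> permutes {..<n} \<and> \<sigma> 0 = a} = card {\<sigma>. \<sigma> permutes {..<n} \<and> \<sigma> 0 = 0}"
proof -
  have n: "0 < n" using a by simp
  let ?f = "\<lambda>\<sigma>. Transposition.transpose 0 a \<circ> \<sigma>"
  have inv: "\<And>\<sigma>. ?f (?f \<sigma>) = \<sigma>"
    by (simp add: fun_eq_iff)
  have "bij_betw ?f {\<sigma>. \<sigma> permutes {..<n} \<and> \<sigma> 0 = 0} {\<sigma>. \<sigma> permutes {..<n} \<and> \<sigma> 0 = a}"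
  proof (rule bij_betw_byWitness[where f' = ?f])
    show "\<forall>x\<in>{\<sigma>. \<sigma> permutes {..<n} \<and> \<sigma> 0 = 0}. ?f (?f x) = x" using inv by (intro ballI) (rule inv)
    show "\<forall>x\<in>{\<sigma>. \<sigma> permutes {..<n} \<and> \<sigma> 0 = a}. ?f (?f x) = x" using inv by (intro ballI) (rule inv)
    show "?f ` {\<sigma>. \<sigma> permutes {..<n} \<and> \<sigma> 0 = 0} \<subseteq> {\<sigma>. \<sigma> permutes {..<n} \<and> \<sigma> 0 = a}"
    proof
      fix y assume "y \<in> ?f ` {\<sigma>. \<sigma> permutes {..<n} \<and> \<sigma> 0 = 0}"
      then obtain \<sigma> where s: "\<sigma> permutes {..<n}" "\<sigma> 0 = 0" "y = ?f \<sigma>" by blast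
      have "?f \<sigma> permutes {..<n}"
        by (rule permutes_compose[OF s(1) permutes_swap_id]) (use a n in auto)
      moreover have "(?f \<sigma>) 0 = a" using s(2) by simp
      ultimately show "y \<in> {\<sigma>. \<sigma> permutes {..<n} \<and> \<sigma> 0 = a}" using s(3) by blast
    qed
    show "?f ` {\<sigma>. \<sigma> permutes {..<n} \<and> \<sigma> 0 = a} \<subseteq> {\<sigma>. \<sigma> permutes {..<n} \<and> \<sigma> 0 = 0}"
    proof
      fix y assume "y \<in> ?f ` {\<sigma>. \<sigma> permutes {..<n} \<and> \<sigma> 0 = a}"
      then obtain \<sigma> where s: "\<sigma> permutes {..<n}" "\<sigma> 0 = a" "y = ?f \<sigma>" by blast
      have "?f \<sigma> permutes {..<n}"
        by (rule permutes_compose[OF s(1) permutes_swap_id]) (use a n in auto)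
      moreover have "(?f \<sigma>) 0 = 0" using s(2) by simp
      ultimately show "y \<in> {\<sigma>. \<sigma> permutes {..<n} \<and> \<sigma> 0 = 0}" using s(3) by blast
    qed
  qed
  from bij_betw_same_card[OF this] show ?thesis by simp
qed

lemma prim:
  fixes h :: form
  assumes n: "n \<ge> 1" and tr: "(\<Sum>a<n. h a a) = 0"
  shows "primitive n h"
proof -
  let ?P = "{p. p permutes {..<n}}"
  let ?H = "\<lambda>j. if j = 0 then h else omega"
  have finP: "finite ?P" by (simp add: finite_permutations)
  obtain n' where n': "n = Suc n'" using n by (cases n) auto
  have prodeq: "(\<Prod>j<n. ?H j (\<sigma> j) (\<tau> j)) = (if \<sigma> = \<tau> then h (\<sigma> 0) (\<sigma> 0) else 0)"
    if s: "\<sigma> \<in> ?P" and t: "\<tau> \<in> ?P" for \<sigma> \<tau>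
  proof (cases "\<sigma> = \<tau>")
    case True
    thus ?thesis unfolding n' prod.lessThan_Suc_shift by (simp add: omega_def)
  next
    case False
    then obtain j where j: "j < n" "j \<noteq> 0" "\<sigma> j \<noteq> \<tau> j"
      using perm_agree0[of \<sigma> n \<tau>] s t by auto
    have "(\<Prod>j<n. ?H j (\<sigma> j) (\<tau> j)) = 0"
      using j by (intro prod_zero) (auto simp: omega_def intro!: bexI[of _ j])
    thus ?thesis using False by simp
  qed
  have "wedge_top n ?H = (\<Sum>\<sigma>\<in>?P. \<Sum>\<tau>\<in>?P. (if \<sigma> = \<tau> then h (\<sigma> 0) (\<sigma> 0) else 0))"
    unfolding wedge_top_def
    by (intro sum.cong refl) (auto simp: prodeq simp flip: of_int_mult)
  also have "\<dots> = (\<Sum>\<sigma>\<in>?P. h (\<sigma> 0) (\<sigma> 0))"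
    using finP by (simp add: sum.delta)
  also have "\<dots> = (\<Sum>\<sigma>\<in>?P. \<Sum>a<n. (if \<sigma> 0 = a then h a a else 0))"
  proof (intro sum.cong refl)
    fix \<sigma> assume "\<sigma> \<in> ?P"
    hence "\<sigma> 0 < n" using n permutes_in_image[of \<sigma> "{..<n}" 0] by simp
    thus "h (\<sigma> 0) (\<sigma> 0) = (\<Sum>a<n. (if \<sigma> 0 = a then h a a else 0))" by simp
  qed
  also have "\<dots> = (\<Sum>a<n. \<Sum>\<sigma>\<in>?P. (if \<sigma> 0 = a then h a a else 0))"
    by (rule sum.swap)
  also have "\<dots> = (\<Sum>a<n. of_nat (card {\<sigma>. \<sigma> permutes {..<n} \<and> \<sigma> 0 = 0}) * h a a)"
  proof (intro sum.cong refl)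
    fix a assume a: "a \<in> {..<n}"
    have "(\<Sum>\<sigma>\<in>?P. (if \<sigma> 0 = a then h a a else 0)) = (\<Sum>\<sigma>\<in>{\<sigma>\<in>?P. \<sigma> 0 = a}. h a a)"
      by (rule sum.inter_filter[symmetric, OF finP])
    also have "{\<sigma>\<in>?P. \<sigma> 0 = a} = {\<sigma>. \<sigma> permutes {..<n} \<and> \<sigma> 0 = a}" by auto
    also have "(\<Sum>\<sigma>\<in>{\<sigma>. \<sigma> permutes {..<n} \<and> \<sigma> 0 = a}. h a a) = of_nat (card {\<sigma>. \<sigma> permutes {..<n} \<and> \<sigma> 0 = a}) * h a a" by simp
    also have "\<dots> = of_nat (card {\<sigma>. \<sigma> permutes {..<n} \<and> \<sigma> 0 = 0}) * h a a"
      using card_fiber[of a n] a by simp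
    finally show "(\<Sum>\<sigma>\<in>?P. (if \<sigma> 0 = a then h a a else 0)) = of_nat (card {\<sigma>. \<sigma> permutes {..<n} \<and> \<sigma> 0 = 0}) * h a a" .
  qed
  also have "\<dots> = 0" using tr by (simp add: sum_distrib_left[symmetric])
  finally show ?thesis unfolding primitive_def .
qed

lemma omega_idm: "omega = idm" by (simp add: omega_def idm_def)
lemma conj_form_ad: "conj_form = ad" by (auto simp: conj_form_def ad_def intro!: ext)

lemma sum_swap3: "(\<Sum>c\<in>C. \<Sum>a\<in>A. \<Sum>b\<in>B. F c a b) = (\<Sum>a\<in>A. \<Sum>b\<in>B. \<Sum>c\<in>C. F c a b)"
proof -
  have "(\<Sum>c\<in>C. \<Sum>a\<in>A. \<Sum>b\<in>B. F c a b) = (\<Sum>a\<in>A. \<Sum>c\<in>C. \<Sum>b\<in>B. F c a b)" by (rule sum.swap)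
  also have "\<dots> = (\<Sum>a\<in>A. \<Sum>b\<in>B. \<Sum>c\<in>C. F c a b)" by (rule sum.cong[OF refl], rule sum.swap)
  finally show ?thesis .
qed

lemma kahler_herm: "kahler n h \<Longrightarrow> feq n (ad h) h"
  unfolding kahler_def feq_def ad_def by (auto simp: mult.commute)

lemma kahler_pd: assumes "kahler n h" shows "pd n h"
proof -
  obtain A where inv: "invertible_n n A" and hA: "feq n h (\<lambda>a b. \<Sum>l<n. A l a * cnj (A l b))"
    using assms unfolding kahler_def by blast
  obtain B where BA: "\<forall>a<n. \<forall>b<n. (\<Sum>c<n. B a c * A c b) = (if a = b then 1 else 0)"
    using inv unfolding invertible_n_def by blast
  show ?thesis unfolding pd_def
  proof (intro allI impI)
    fix x :: "nat \<Rightarrow> complex" assume x: "\<exists>i<n. x i \<noteq> 0"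
    define y where "y = (\<lambda>l. \<Sum>a<n. A l a * x a)"
    have "qf n h x = (\<Sum>a<n. \<Sum>b<n. \<Sum>l<n. (A l a * x a) * (cnj (A l b) * cnj (x b)))"
      unfolding qf_def using hA unfolding feq_def
      by (intro sum.cong refl) (simp add: sum_distrib_left sum_distrib_right algebra_simps)
    also have "\<dots> = (\<Sum>l<n. \<Sum>a<n. \<Sum>b<n. (A l a * x a) * (cnj (A l b) * cnj (x b)))"
      by (rule sum_swap3[symmetric])
    also have "\<dots> = (\<Sum>l<n. y l * cnj (y l))"
      unfolding y_def cnj_sum by (simp add: sum_product)
    finally have q: "qf n h x = (\<Sum>l<n. y l * cnj (y l))" .
    have "\<exists>l<n. y l \<noteq> 0"
    proof (rule ccontr)
      assume "\<not> ?thesis" hence y0: "\<forall>l<n. y l = 0" by auto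
      obtain i where i: "i < n" "x i \<noteq> 0" using x by auto
      have "(\<Sum>c<n. B i c * y c) = (\<Sum>c<n. \<Sum>a<n. B i c * A c a * x a)"
        unfolding y_def by (simp add: sum_distrib_left mult.assoc)
      also have "\<dots> = (\<Sum>a<n. (\<Sum>c<n. B i c * A c a) * x a)"
        by (subst sum.swap) (simp add: sum_distrib_right)
      also have "\<dots> = x i" using BA i by (simp add: if_mult0)
      finally have "x i = (\<Sum>c<n. B i c * y c)" by simp
      also have "\<dots> = 0" using y0 by simp
      finally show False using i by simp
    qed
    then obtain l0 where l0: "l0 < n" "y l0 \<noteq> 0" by auto
    have "Re (qf n h x) = (\<Sum>l<n. (cmod (y l))\<^sup>2)"
      unfolding q Re_sum complex_norm_square[symmetric] by simp
    also have "\<dots> > 0" using l0 by (intro sum_pos2[of _ l0]) auto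
    finally show "0 < Re (qf n h x)" .
  qed
qed

lemma pd_diag: assumes "pd n h" "a < n" shows "0 < Re (h a a)"
proof -
  define x0 where "x0 = (\<lambda>i. if i = a then (1::complex) else 0)"
  have "qf n h x0 = (\<Sum>i<n. \<Sum>j<n. (if i = a then 1 else 0) * h i j * (if j = a then 1 else 0))"
    unfolding qf_def x0_def by (intro sum.cong refl) simp
  also have "\<dots> = h a a" using assms(2) by (simp add: if_mult0 mult_if0)
  finally have e: "qf n h x0 = h a a" .
  have "(\<exists>i<n. x0 i \<noteq> 0) \<longrightarrow> 0 < Re (qf n h x0)" using assms(1) unfolding pd_def by (rule spec)
  moreover have "\<exists>i<n. x0 i \<noteq> 0" using assms(2) unfolding x0_def by auto
  ultimately have "0 < Re (qf n h x0)" by (rule mp)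
  thus ?thesis using e by simp
qed

lemma pd_tr: assumes "pd n h" "n \<ge> 1" shows "0 < Re (\<Sum>a<n. h a a)"
  unfolding Re_sum using assms pd_diag by (intro sum_pos) (auto simp: lessThan_empty_iff)

lemma trace_cc:
  assumes "unitary n U"
  shows "(\<Sum>c<n. mm n (ad U) (mm n h U) c c) = (\<Sum>a<n. h a a)"
proof -
  have UU: "feq n (mm n U (ad U)) idm" using assms unfolding unitary_def by simp
  have "(\<Sum>c<n. mm n (ad U) (mm n h U) c c) = (\<Sum>c<n. \<Sum>a<n. \<Sum>b<n. cnj (U a c) * h a b * U b c)"
    unfolding mm_def ad_def by (simp add: sum_distrib_left mult.assoc)
  also have "\<dots> = (\<Sum>a<n. \<Sum>b<n. \<Sum>c<n. cnj (U a c) * h a b * U b c)" by (rule sum_swap3)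
  also have "\<dots> = (\<Sum>a<n. \<Sum>b<n. h a b * mm n U (ad U) b a)"
    unfolding mm_def ad_def by (simp add: sum_distrib_left algebra_simps)
  also have "\<dots> = (\<Sum>a<n. \<Sum>b<n. h a b * idm b a)"
    using UU unfolding feq_def by (intro sum.cong refl) simp
  also have "\<dots> = (\<Sum>a<n. h a a)" by (simp add: sum_idm_r)
  finally show ?thesis .
qed

lemma cc_mm: "coord_change n (\<lambda>a c. cnj (U a c)) h = mm n (ad U) (mm n h U)"
  unfolding coord_change_def mm_def ad_def
  by (auto intro!: ext simp: sum_distrib_left mult.assoc)

definition trshape :: "nat \<Rightarrow> nat \<Rightarrow> (nat \<Rightarrow> nat \<Rightarrow> form) \<Rightarrow> bool" where
  "trshape n k N \<longleftrightarrow> feq n (N 0 0) omega \<and>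
     (\<forall>i<k. i \<noteq> 0 \<longrightarrow> (\<Sum>a<n. N i i a a) = of_nat n) \<and>
     (\<forall>i<k. \<forall>j<k. i < j \<longrightarrow> (\<Sum>a<n. N i j a a) = 0 \<and> feq n (N j i) (ad (N i j)))"

lemma trshape_ns: assumes "n \<ge> 1" "trshape n k N" shows "normal_shape n k N"
proof -
  have om: "(\<Sum>a<n. omega a a) = of_nat n" by (simp add: omega_def)
  show ?thesis using assms unfolding trshape_def normal_shape_def conj_form_ad
    by (auto intro!: prim simp: sum_subtractf om)
qed

lemma trshape_cc:
  assumes U: "unitary n U" and N: "trshape n k N"
  shows "trshape n k (\<lambda>i j. mm n (ad U) (mm n (N i j) U))"
proof -
  have UU: "feq n (mm n (ad U) U) idm" using U unfolding unitary_def by simp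
  have adc: "\<And>X. ad (mm n (ad U) (mm n X U)) = mm n (ad U) (mm n (ad X) U)"
    by (simp add: ad_mm mm_assoc)
  have "feq n (mm n (ad U) (mm n (N 0 0) U)) (mm n (ad U) (mm n idm U))"
    using N unfolding trshape_def omega_idm by (intro mm_cong[OF feq_refl mm_cong]) auto
  also have "feq n \<dots> (mm n (ad U) U)" by (rule mid_id[OF feq_refl])
  also have "feq n \<dots> idm" by (rule UU)
  finally have 0: "feq n (mm n (ad U) (mm n (N 0 0) U)) omega" unfolding omega_idm .
  show ?thesis using N 0 unfolding trshape_def trace_cc[OF U] adc
    by (auto intro!: mm_cong[OF feq_refl mm_cong[OF _ feq_refl]])
qed



lemma spectral_pd:
  assumes U: "unitary m U" and D: "feq m (mm m (ad U) (mm m A U)) (dg (\<lambda>i. complex_of_real (d i)))"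
    and P: "pd m A"
  shows "\<forall>i<m. 0 < d i"
proof (intro allI impI)
  fix i assume i: "i < m"
  define x where "x = (\<lambda>p. cnj (U p i))"
  have "qf m A x = mm m (ad U) (mm m A U) i i"
    unfolding qf_def mm_def ad_def x_def by (simp add: sum_distrib_left mult.assoc)
  also have "\<dots> = complex_of_real (d i)" using D i unfolding feq_def dg_def by simp
  finally have q: "qf m A x = complex_of_real (d i)" .
  have "\<exists>p<m. x p \<noteq> 0"
  proof (rule ccontr)
    assume "\<not> ?thesis" hence z: "\<forall>p<m. U p i = 0" unfolding x_def by simp
    have "mm m (ad U) U i i = 1" using U i unfolding unitary_def feq_def idm_def by simp
    moreover have "mm m (ad U) U i i = 0" unfolding mm_def ad_def using z by simp
    ultimately show False by simp
  qed
  hence "(\<exists>p<m. x p \<noteq> 0) \<and> ((\<exists>p<m. x p \<noteq> 0) \<longrightarrow> 0 < Re (qf m A x))"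
    using P unfolding pd_def by blast
  hence "0 < Re (qf m A x)" by blast
  thus "0 < d i" using q by simp
qed

lemma cancel_u: "unitary m U \<Longrightarrow> feq m (mm m (ad U) (mm m U X)) X"
  unfolding mm_assoc[symmetric] unitary_def
  by (rule feq_trans[OF mm_cong[OF _ feq_refl] mm_idl]) simp

lemma unconj:
  assumes "unitary m U"
  shows "feq m (mm m U (mm m (mm m (ad U) (mm m X U)) (ad U))) X"
proof -
  have UU: "feq m (mm m U (ad U)) idm" using assms unfolding unitary_def by simp
  have e: "mm m U (mm m (mm m (ad U) (mm m X U)) (ad U)) = mm m (mm m U (ad U)) (mm m X (mm m U (ad U)))"
    by (simp add: mm_assoc)
  show ?thesis unfolding e
    by (rule feq_trans[OF mm_cong[OF UU mm_cong[OF feq_refl UU]] feq_trans[OF mm_idl mm_idr]])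
qed



lemma C_exists:
  assumes hT: "feq k (ad T) T" and pT: "pd k T" and T00: "T 0 0 = 1" and k: "0 < k"
  shows "\<exists>C. invertible_n k C \<and> (\<forall>j<k. C 0 j = idm 0 j) \<and> feq k (mm k C (mm k T (ad C))) idm"
proof -
  obtain U d where U: "unitary k U" and D: "feq k (mm k (ad U) (mm k T U)) (dg (\<lambda>i. complex_of_real (d i)))"
    using spectral[OF hT] by blast
  have dpos: "\<forall>i<k. 0 < d i" by (rule spectral_pd[OF U D pT])
  define dd where "dd = (\<lambda>i. complex_of_real (d i))"
  have TU: "feq k T (mm k U (mm k (dg dd) (ad U)))"
    using feq_trans[OF feq_sym[OF unconj[OF U, of T]] mm_cong[OF feq_refl mm_cong[OF D feq_refl]]]
    unfolding dd_def .
  define r where "r = (\<lambda>j. U 0 j * complex_of_real (sqrt (d j)))"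
  have "T 0 0 = (\<Sum>j<k. U 0 j * (dd j * cnj (U 0 j)))"
    using TU k unfolding feq_def mm_def[of k U] by (simp add: mm_dgl ad_def)
  also have "\<dots> = (\<Sum>j<k. cnj (r j) * cnj (cnj (r j)))"
  proof (intro sum.cong refl)
    fix j assume "j \<in> {..<k}"
    hence dj: "d j > 0" using dpos by simp
    have "complex_of_real (sqrt (d j)) * complex_of_real (sqrt (d j)) = dd j"
      unfolding dd_def using dj by (simp flip: of_real_mult)
    thus "U 0 j * (dd j * cnj (U 0 j)) = cnj (r j) * cnj (cnj (r j))"
      unfolding r_def by (simp add: algebra_simps)
  qed
  finally have r1: "(\<Sum>j<k. cnj (r j) * cnj (cnj (r j))) = 1" using T00 by simp
  obtain V where V: "unitary k V" and V0: "\<forall>i<k. V i 0 = cnj (r i)"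
    using house[OF k r1] by blast
  define e where "e = (\<lambda>i. complex_of_real (1 / sqrt (d i)))"
  define E where "E = dg e"
  have adE: "ad E = E" unfolding E_def ad_dg e_def by simp
  define G where "G = mm k U (mm k E V)"
  define C where "C = ad G"
  have adC: "ad C = G" unfolding C_def by simp
  have adG: "ad G = mm k (ad V) (mm k E (ad U))" unfolding G_def by (simp add: ad_mm adE mm_assoc)
  have EDE: "feq k (mm k E (mm k (dg dd) (mm k E V))) V"
    unfolding feq_def
  proof (intro allI impI)
    fix i j assume ij: "i < k" "j < k"
    have "d i > 0" using dpos ij by simp
    hence "e i * (dd i * e i) = 1" unfolding e_def dd_def
      by (simp flip: of_real_mult add: field_simps)
    thus "mm k E (mm k (dg dd) (mm k E V)) i j = V i j"
      unfolding E_def using ij by (simp add: mm_dgl mult.assoc[symmetric])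
  qed
  have CTC: "feq k (mm k C (mm k T (ad C))) idm"
  proof -
    have "feq k (mm k C (mm k T (ad C))) (mm k C (mm k (mm k U (mm k (dg dd) (ad U))) (ad C)))"
      by (rule mm_cong[OF feq_refl mm_cong[OF TU feq_refl]])
    also have "mm k C (mm k (mm k U (mm k (dg dd) (ad U))) (ad C)) =
        mm k (ad V) (mm k E (mm k (ad U) (mm k U (mm k (dg dd) (mm k (ad U) (mm k U (mm k E V)))))))"
      unfolding adC C_def adG unfolding G_def by (simp add: mm_assoc ad_mm adE)
    also have "feq k \<dots> (mm k (ad V) (mm k E (mm k (dg dd) (mm k (ad U) (mm k U (mm k E V))))))"
      by (rule mm_cong[OF feq_refl mm_cong[OF feq_refl cancel_u[OF U]]])
    also have "feq k \<dots> (mm k (ad V) (mm k E (mm k (dg dd) (mm k E V))))"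
      by (rule mm_cong[OF feq_refl mm_cong[OF feq_refl mm_cong[OF feq_refl cancel_u[OF U]]]])
    also have "feq k \<dots> (mm k (ad V) V)"
      by (rule mm_cong[OF feq_refl EDE])
    also have "feq k \<dots> idm" using V unfolding unitary_def by simp
    finally show ?thesis .
  qed
  have C0: "\<forall>j<k. C 0 j = idm 0 j"
  proof (intro allI impI)
    fix j assume j: "j < k"
    have "G j 0 = (\<Sum>p<k. U j p * (e p * V p 0))"
      unfolding G_def mm_def[of k U] E_def by (simp add: mm_dgl)
    also have "\<dots> = (\<Sum>p<k. U j p * cnj (U 0 p))"
    proof (intro sum.cong refl)
      fix p assume p: "p \<in> {..<k}"
      hence "d p > 0" using dpos by simp
      hence "e p * complex_of_real (sqrt (d p)) = 1" unfolding e_def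
        by (simp flip: of_real_mult)
      thus "U j p * (e p * V p 0) = U j p * cnj (U 0 p)"
        using V0 p unfolding r_def by (simp add: algebra_simps)
    qed
    also have "\<dots> = mm k U (ad U) j 0" unfolding mm_def ad_def by simp
    also have "\<dots> = idm j 0" using U j k unfolding unitary_def feq_def by simp
    finally show "C 0 j = idm 0 j" unfolding C_def ad_def idm_def by auto
  qed
  have "invertible_n k C" by (rule bridge_inv[OF CTC])
  with C0 CTC show ?thesis by blast
qed



definition trm :: "nat \<Rightarrow> (nat \<Rightarrow> nat \<Rightarrow> form) \<Rightarrow> form" where
  "trm n M = (\<lambda>i j. (\<Sum>a<n. M i j a a) / of_nat n)"

lemma hermM_pt: "\<forall>i<k. \<forall>j<k. feq n (M i j) (conj_form (M j i)) \<Longrightarrow> i < k \<Longrightarrow> j < k \<Longrightarrow> a < n \<Longrightarrow> b < n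
   \<Longrightarrow> M i j a b = cnj (M j i b a)"
  unfolding feq_def conj_form_def by blast

lemma T_props:
  assumes n1: "n \<ge> 1" and gp: "griffiths_positive n k M" and m00: "feq n (M 0 0) omega"
  shows "feq k (ad (trm n M)) (trm n M)" "pd k (trm n M)" "trm n M 0 0 = 1"
proof -
  have hermM: "\<forall>i<k. \<forall>j<k. feq n (M i j) (conj_form (M j i))"
    and kahM: "\<forall>\<theta>::nat \<Rightarrow> complex. (\<exists>i<k. \<theta> i \<noteq> 0) \<longrightarrow>
        kahler n (\<lambda>a b. \<Sum>i<k. \<Sum>j<k. \<theta> i * M i j a b * cnj (\<theta> j))"
    using gp unfolding griffiths_positive_def by simp_all
  show "feq k (ad (trm n M)) (trm n M)"
    unfolding feq_def
  proof (intro allI impI)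
    fix i j assume ij: "i < k" "j < k"
    have "\<forall>a<n. M i j a a = cnj (M j i a a)"
      using hermM_pt[OF hermM ij] by blast
    thus "ad (trm n M) i j = trm n M i j"
      unfolding ad_def trm_def by (simp add: cnj_sum)
  qed
  show "pd k (trm n M)"
    unfolding pd_def
  proof (intro allI impI)
    fix \<theta> :: "nat \<Rightarrow> complex" assume th: "\<exists>i<k. \<theta> i \<noteq> 0"
    define H where "H = (\<lambda>a b. \<Sum>i<k. \<Sum>j<k. \<theta> i * M i j a b * cnj (\<theta> j))"
    have "kahler n H" using kahM th unfolding H_def by blast
    hence tH: "0 < Re (\<Sum>a<n. H a a)" using pd_tr[OF kahler_pd n1] by blast
    have "qf k (trm n M) \<theta> = (\<Sum>i<k. \<Sum>j<k. (\<Sum>a<n. \<theta> i * M i j a a * cnj (\<theta> j)) / of_nat n)"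
      unfolding qf_def trm_def
      by (intro sum.cong refl) (simp add: sum_distrib_left sum_distrib_right sum_divide_distrib)
    also have "\<dots> = (\<Sum>i<k. \<Sum>j<k. \<Sum>a<n. \<theta> i * M i j a a * cnj (\<theta> j)) / of_nat n"
      by (simp add: sum_divide_distrib)
    also have "(\<Sum>i<k. \<Sum>j<k. \<Sum>a<n. \<theta> i * M i j a a * cnj (\<theta> j)) = (\<Sum>a<n. H a a)"
      unfolding H_def by (rule sum_swap3[symmetric])
    finally have "qf k (trm n M) \<theta> = (\<Sum>a<n. H a a) / of_nat n" .
    moreover have "Re ((\<Sum>a<n. H a a) / of_nat n) = Re (\<Sum>a<n. H a a) / real n"
      by (simp add: Re_divide_of_nat)
    ultimately show "0 < Re (qf k (trm n M) \<theta>)" using tH n1 by simp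
  qed
  show "trm n M 0 0 = 1"
    using m00 n1 unfolding trm_def feq_def omega_def by simp
qed

lemma N_trshape:
  assumes n1: "n \<ge> 1" and k: "0 < k" and gp: "griffiths_positive n k M" and m00: "feq n (M 0 0) omega"
    and C0: "\<forall>j<k. C 0 j = idm 0 j" and CTC: "feq k (mm k C (mm k (trm n M) (ad C))) idm"
  shows "trshape n k (congr k C M)"
    and "\<forall>i<k. \<forall>j<k. (\<Sum>a<n. congr k C M i j a a) = of_nat n * idm i j"
proof -
  have hermM: "\<forall>i<k. \<forall>j<k. feq n (M i j) (conj_form (M j i))"
    using gp unfolding griffiths_positive_def by (rule conjunct1)
  let ?N = "congr k C M"
  show tr: "\<forall>i<k. \<forall>j<k. (\<Sum>a<n. ?N i j a a) = of_nat n * idm i j"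
  proof (intro allI impI)
    fix i j assume ij: "i < k" "j < k"
    have "(\<Sum>a<n. ?N i j a a) = (\<Sum>a<n. \<Sum>p<k. \<Sum>q<k. C i p * M p q a a * cnj (C j q))"
      unfolding congr_def by simp
    also have "\<dots> = (\<Sum>p<k. \<Sum>q<k. \<Sum>a<n. C i p * M p q a a * cnj (C j q))"
      by (rule sum_swap3)
    also have "\<dots> = (\<Sum>p<k. \<Sum>q<k. of_nat n * (C i p * trm n M p q * cnj (C j q)))"
    proof (intro sum.cong refl)
      fix p q
      have "of_nat n * (C i p * ((\<Sum>a<n. M p q a a) / of_nat n) * cnj (C j q)) = C i p * (\<Sum>a<n. M p q a a) * cnj (C j q)"
        using n1 by (simp add: field_simps)
      thus "(\<Sum>a<n. C i p * M p q a a * cnj (C j q)) = of_nat n * (C i p * trm n M p q * cnj (C j q))"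
        unfolding trm_def by (simp add: sum_distrib_left sum_distrib_right)
    qed
    also have "\<dots> = of_nat n * mm k C (mm k (trm n M) (ad C)) i j"
      unfolding mm_def ad_def by (simp add: sum_distrib_left mult.assoc)
    also have "\<dots> = of_nat n * idm i j" using CTC ij unfolding feq_def by simp
    finally show "(\<Sum>a<n. ?N i j a a) = of_nat n * idm i j" .
  qed
  have N00: "feq n (?N 0 0) omega"
    unfolding feq_def
  proof (intro allI impI)
    fix a b assume ab: "a < n" "b < n"
    have "?N 0 0 a b = (\<Sum>p<k. \<Sum>q<k. idm 0 p * M p q a b * cnj (idm 0 q))"
      unfolding congr_def using C0 by simp
    also have "\<dots> = (\<Sum>p<k. \<Sum>q<k. idm 0 p * M p q a b * idm 0 q)"
      by (intro sum.cong refl) (auto simp: idm_def)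
    also have "\<dots> = M 0 0 a b" using k unfolding idm_def by (simp add: if_mult0 mult_if0)
    also have "\<dots> = omega a b" using m00 ab unfolding feq_def by simp
    finally show "?N 0 0 a b = omega a b" .
  qed
  have NH: "\<forall>i<k. \<forall>j<k. feq n (?N j i) (ad (?N i j))"
  proof (intro allI impI)
    fix i j assume ij: "i < k" "j < k"
    show "feq n (?N j i) (ad (?N i j))"
      unfolding feq_def
    proof (intro allI impI)
      fix a b assume ab: "a < n" "b < n"
      have "ad (?N i j) a b = (\<Sum>p<k. \<Sum>q<k. cnj (C i p) * cnj (M p q b a) * C j q)"
        unfolding ad_def congr_def by (simp add: cnj_sum)
      also have "\<dots> = (\<Sum>p<k. \<Sum>q<k. cnj (C i p) * M q p a b * C j q)"
      proof (intro sum.cong refl)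
        fix p q assume pq: "p \<in> {..<k}" "q \<in> {..<k}"
        have "M q p a b = cnj (M p q b a)" using pq ab by (intro hermM_pt[OF hermM]) auto
        thus "cnj (C i p) * cnj (M p q b a) * C j q = cnj (C i p) * M q p a b * C j q" by simp
      qed
      also have "\<dots> = (\<Sum>q<k. \<Sum>p<k. cnj (C i p) * M q p a b * C j q)" by (rule sum.swap)
      also have "\<dots> = ?N j i a b" unfolding congr_def by (simp add: algebra_simps)
      finally show "?N j i a b = ad (?N i j) a b" by simp
    qed
  qed
  show "trshape n k ?N"
    unfolding trshape_def using N00 NH tr by (auto simp: idm_def)
qed



theorem mainTheorem4:
  fixes n k :: nat and M :: "nat \<Rightarrow> nat \<Rightarrow> form"
  assumes "n \<ge> 1" and "k \<ge> 2"
    and "griffiths_positive n k M"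
    and "feq n (M 0 0) omega"
  shows "(\<exists>C. invertible_n k C \<and> normal_shape n k (congr k C M)) \<and>
         (\<exists>V C. invertible_n n V \<and> feq n (coord_change n V omega) omega \<and>
            invertible_n k C \<and>
            (let N = (\<lambda>i j. coord_change n V (congr k C M i j)) in
               normal_shape n k N \<and>
               (\<exists>b::nat \<Rightarrow> real.
                  feq n (\<lambda>x y. N 1 1 x y - omega x y)
                        (\<lambda>x y. if x = y then complex_of_real (b x) else 0) \<and>
                  (\<Sum>l<n. b l) = 0 \<and> (\<forall>l<n. b l > -1))))"
proof -
  have k: "0 < k" using assms(2) by simp
  note TP = T_props[OF assms(1) assms(3) assms(4)]
  obtain C where invC: "invertible_n k C" and C0: "\<forall>j<k. C 0 j = idm 0 j"
    and CTC: "feq k (mm k C (mm k (trm n M) (ad C))) idm"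
    using C_exists[OF TP(1) TP(2) TP(3) k] by blast
  note NT = N_trshape[OF assms(1) k assms(3) assms(4) C0 CTC]
  let ?N = "congr k C M"
  have part1: "\<exists>C. invertible_n k C \<and> normal_shape n k (congr k C M)"
    using invC trshape_ns[OF assms(1) NT(1)] by blast
  have one: "1 < k" using assms(2) by simp
  have th: "\<exists>i<k. C 1 i \<noteq> 0"
  proof (rule ccontr)
    assume "\<not> ?thesis" hence z: "\<forall>i<k. C 1 i = 0" by simp
    have "mm k C (mm k (trm n M) (ad C)) 1 1 = 0" unfolding mm_def using z by simp
    moreover have "mm k C (mm k (trm n M) (ad C)) 1 1 = 1" using CTC one unfolding feq_def idm_def by simp
    ultimately show False by simp
  qed
  have kN: "kahler n (?N 1 1)"
  proof -
    have "\<forall>\<theta>::nat \<Rightarrow> complex. (\<exists>i<k. \<theta> i \<noteq> 0) \<longrightarrow>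
        kahler n (\<lambda>a b. \<Sum>i<k. \<Sum>j<k. \<theta> i * M i j a b * cnj (\<theta> j))"
      using assms(3) unfolding griffiths_positive_def by (rule conjunct2)
    hence "(\<exists>i<k. C 1 i \<noteq> 0) \<longrightarrow> kahler n (\<lambda>a b. \<Sum>i<k. \<Sum>j<k. C 1 i * M i j a b * cnj (C 1 j))"
      by (rule spec)
    from this th have "kahler n (\<lambda>a b. \<Sum>i<k. \<Sum>j<k. C 1 i * M i j a b * cnj (C 1 j))" by (rule mp)
    thus ?thesis unfolding congr_def .
  qed
  obtain U1 d1 where U1: "unitary n U1"
    and D1: "feq n (mm n (ad U1) (mm n (?N 1 1) U1)) (dg (\<lambda>i. complex_of_real (d1 i)))"
    using spectral[OF kahler_herm[OF kN]] by blast
  have d1pos: "\<forall>i<n. 0 < d1 i" by (rule spectral_pd[OF U1 D1 kahler_pd[OF kN]])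
  define Vc where "Vc = (\<lambda>a c. cnj (U1 a c))"
  have invV: "invertible_n n Vc"
  proof (rule bridge_inv[where B = "\<lambda>i j. U1 j i"])
    show "feq n (mm n Vc (\<lambda>i j. U1 j i)) idm"
      unfolding feq_def
    proof (intro allI impI)
      fix a b assume ab: "a < n" "b < n"
      have "mm n Vc (\<lambda>i j. U1 j i) a b = mm n U1 (ad U1) b a"
        unfolding mm_def ad_def Vc_def by (simp add: mult.commute)
      also have "\<dots> = idm b a" using U1 ab unfolding unitary_def feq_def by simp
      also have "\<dots> = idm a b" unfolding idm_def by auto
      finally show "mm n Vc (\<lambda>i j. U1 j i) a b = idm a b" .
    qed
  qed
  have ccO: "feq n (coord_change n Vc omega) omega"
    unfolding Vc_def cc_mm omega_idm
    using feq_trans[OF mid_id[OF feq_refl] conjunct1[OF U1[unfolded unitary_def]]] .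
  define N' where "N' = (\<lambda>i j. mm n (ad U1) (mm n (?N i j) U1))"
  have N'eq: "(\<lambda>i j. coord_change n Vc (?N i j)) = N'" unfolding N'_def Vc_def cc_mm by simp
  have ns: "normal_shape n k N'" unfolding N'_def by (rule trshape_ns[OF assms(1) trshape_cc[OF U1 NT(1)]])
  define b where "b = (\<lambda>l. d1 l - 1)"
  have bdiag: "feq n (\<lambda>x y. N' 1 1 x y - omega x y) (\<lambda>x y. if x = y then complex_of_real (b x) else 0)"
    using D1 unfolding N'_def feq_def dg_def omega_def b_def by auto
  have "(\<Sum>a<n. N' 1 1 a a) = (\<Sum>a<n. ?N 1 1 a a)" unfolding N'_def by (rule trace_cc[OF U1])
  also have "\<dots> = of_nat n" using NT(2) one unfolding idm_def by simp
  finally have t1: "(\<Sum>a<n. N' 1 1 a a) = of_nat n" .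
  have "(\<Sum>a<n. N' 1 1 a a) = (\<Sum>a<n. complex_of_real (d1 a))"
    using D1 unfolding N'_def feq_def dg_def by (intro sum.cong refl) auto
  hence "complex_of_real (\<Sum>a<n. d1 a) = complex_of_real (real n)" using t1 by (simp add: of_real_sum)
  hence sd: "(\<Sum>a<n. d1 a) = real n" by (simp only: of_real_eq_iff)
  have bsum: "(\<Sum>l<n. b l) = 0" unfolding b_def sum_subtractf using sd by simp
  have bpos: "\<forall>l<n. b l > -1" using d1pos unfolding b_def by simp
  have part2: "invertible_n n Vc \<and> feq n (coord_change n Vc omega) omega \<and> invertible_n k C \<and>
            (let N = (\<lambda>i j. coord_change n Vc (congr k C M i j)) in
               normal_shape n k N \<and>
               (\<exists>b::nat \<Rightarrow> real.
                  feq n (\<lambda>x y. N 1 1 x y - omega x y)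
                        (\<lambda>x y. if x = y then complex_of_real (b x) else 0) \<and>
                  (\<Sum>l<n. b l) = 0 \<and> (\<forall>l<n. b l > -1)))"
    unfolding Let_def N'eq using invV ccO invC ns bdiag bsum bpos by blast
  show ?thesis using part1 part2 by blast
qed


end
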